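(* Let $K\ge1$ and $n\ge1$. Let $p^p_1,\dots,p^p_K$ be fixed predictive densities and let $\tilde y_1,\dots,\tilde y_n$ be i.i.d. from a distribution $Q$ (with $y\sim Q$ denoting a generic draw). Suppose there is $s>0$ such that for each $k$ the log loss $-\log p^p_k(\tilde y)$ is sub-Gaussian: for all $\lambda\in\mathbb{R}$, $$\log\mathrm{E}\big[e^{\lambda(-\log p^p_k(\tilde y)-\mathrm{E}[-\log p^p_k(y)])}\big]\le \frac{\lambda^2 s^2}{2}.$$ For $w^p$ in the probability simplex $S^K$ define the pointwise out-of-sample Jensen gap $$J_{out,i}(w^p)=-\sum_k w^p_k\log p^p_k(\tilde y_i)+\log\sum_k w^p_k p^p_k(\tilde y_i).$$ Then there exists $s'>0$ such that for every $w^p\in S^K$, the random variable $\sum_{i=1}^n J_{out,i}(w^p)$ is sub-Gaussian with variance (proxy) at most $n s'$, i.e. $\log\mathrm{E}\big[e^{\lambda(Z-\mathrm{E}Z)}\big]\le \lambda^2 n s'/2$ for all $\lambda\in\mathbb{R}$, where $Z=\sum_i J_{out,i}(w^p)$.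
   Context: $S^K$ is the set of probability vectors with $K$ components. A real random variable $Z$ is called sub-Gaussian with variance (proxy) $\sigma^2$ if $\log\mathrm{E}[e^{\lambda(Z-\mathrm{E}Z)}]\le\lambda^2\sigma^2/2$ for all $\lambda\in\mathbb{R}$. *)

theory Defs
  imports "HOL-Probability.Probability"
begin

definition prob_simplex :: "nat \<Rightarrow> (nat \<Rightarrow> real) set" where
  "prob_simplex K = {w. (\<forall>k<K. 0 \<le> w k) \<and> (\<Sum>k<K. w k) = 1}"

definition subgaussian :: "'a measure \<Rightarrow> ('a \<Rightarrow> real) \<Rightarrow> real \<Rightarrow> bool" where
  "subgaussian M Z sigma2 \<longleftrightarrow> integrable M Z \<and>
     (\<forall>l::real. integrable M (\<lambda>x. exp (l * (Z x - integral\<^sup>L M Z))) \<and>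
        ln (integral\<^sup>L M (\<lambda>x. exp (l * (Z x - integral\<^sup>L M Z)))) \<le> l\<^sup>2 * sigma2 / 2)"

definition jensen_gap :: "nat \<Rightarrow> (nat \<Rightarrow> 'a \<Rightarrow> real) \<Rightarrow> (nat \<Rightarrow> real) \<Rightarrow> 'a \<Rightarrow> real" where
  "jensen_gap K p w y = - (\<Sum>k<K. w k * ln (p k y)) + ln (\<Sum>k<K. w k * p k y)"

end

theory Submission imports Defs begin

lemma exp_quad: "exp (y::real) \<le> 1 + y + y\<^sup>2 * exp \<bar>y\<bar>"
proof -
  define a where "a = (\<lambda>n. inverse (fact (n + 2)) * (y ^ (n + 2)))"
  define b where "b = (\<lambda>n. y\<^sup>2 * (inverse (fact n) * \<bar>y\<bar> ^ n))"
  have e: "exp y = 1 + y + suminf a"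
    using exp_first_two_terms[of y] by (simp add: a_def)
  have sb: "summable b" unfolding b_def
    by (intro summable_mult summable_exp)
  have sbv: "suminf b = y\<^sup>2 * exp \<bar>y\<bar>"
    unfolding b_def by (subst suminf_mult[OF summable_exp]) (simp add: exp_def field_simps)
  have ab: "norm (a n) \<le> b n" for n
  proof -
    have f: "fact n \<le> (fact (n+2) :: real)" by (intro fact_mono) auto
    have "norm (a n) = inverse (fact (n + 2)) * (y\<^sup>2 * \<bar>y\<bar> ^ n)"
      by (simp add: a_def abs_mult power_add power_abs power2_eq_square)
    also have "\<dots> \<le> inverse (fact n) * (y\<^sup>2 * \<bar>y\<bar> ^ n)"
      by (intro mult_right_mono le_imp_inverse_le f) auto
    finally show ?thesis by (simp add: b_def mult_ac)
  qed
  have sa: "summable a"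
    by (rule summable_comparison_test[OF _ sb]) (use ab in auto)
  have "suminf a \<le> suminf b"
    by (intro suminf_le sa sb) (use ab in \<open>auto intro: order_trans[OF abs_ge_self]\<close>)
  then show ?thesis using e sbv by simp
qed

lemma sq_le_exp: "0 \<le> (z::real) \<Longrightarrow> z\<^sup>2 \<le> 4 * exp z"
proof -
  assume z: "0 \<le> z"
  have "z/2 \<le> exp (z/2)" using exp_ge_add_one_self[of "z/2"] by linarith
  then have "(z/2)\<^sup>2 \<le> (exp (z/2))\<^sup>2" by (intro power_mono) (use z in auto)
  also have "(exp (z/2))\<^sup>2 = exp z" by (simp add: power2_eq_square flip: exp_add)
  finally show ?thesis by (simp add: power2_eq_square)
qed

lemma subg_core:
  fixes X Z :: "'a \<Rightarrow> real" and l C :: real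
  assumes P: "prob_space M"
    and Xm: "X \<in> borel_measurable M" and Zm: "Z \<in> borel_measurable M"
    and Z0: "\<And>x. 0 \<le> Z x"
    and XZ: "AE x in M. \<bar>X x\<bar> \<le> Z x"
    and EX: "integral\<^sup>L M X = 0"
    and iZ: "\<And>t. 0 \<le> t \<Longrightarrow> integrable M (\<lambda>x. exp (t * Z x))"
    and bZ: "\<And>t. 1 \<le> t \<Longrightarrow> integral\<^sup>L M (\<lambda>x. exp (t * Z x)) \<le> exp (C * t\<^sup>2)"
    and C0: "0 \<le> C"
  shows "integrable M (\<lambda>x. exp (l * X x)) \<and>
         integral\<^sup>L M (\<lambda>x. exp (l * X x)) \<le> exp (l\<^sup>2 * (4 * exp (4 * C)))"
proof -
  interpret prob_space M by fact
  note [measurable] = Xm Zm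
  have iE: "integrable M (\<lambda>x. exp (l * X x))"
  proof (rule Bochner_Integration.integrable_bound[OF iZ[of "\<bar>l\<bar>"]])
    show "(\<lambda>x. exp (l * X x)) \<in> borel_measurable M" using Xm by simp
    show "AE x in M. norm (exp (l * X x)) \<le> norm (exp (\<bar>l\<bar> * Z x))"
      using XZ
    proof eventually_elim
      case (elim x)
      have "l * X x \<le> \<bar>l\<bar> * \<bar>X x\<bar>" by (simp flip: abs_mult)
      also have "\<dots> \<le> \<bar>l\<bar> * Z x" by (rule mult_left_mono) (use elim in auto)
      finally have "l * X x \<le> \<bar>l\<bar> * Z x" .
      then show ?case by simp
    qed
  qed simp
  have iX: "integrable M X"
  proof (rule Bochner_Integration.integrable_bound[OF iZ[of 1]])
    show "AE x in M. norm (X x) \<le> norm (exp (1 * Z x))"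
      using XZ
    proof eventually_elim
      case (elim x)
      have "Z x \<le> exp (Z x)" using exp_ge_add_one_self[of "Z x"] by linarith
      then show ?case using elim by simp
    qed
  qed (use Xm in auto)
  show ?thesis
  proof (intro conjI iE)
    show "integral\<^sup>L M (\<lambda>x. exp (l * X x)) \<le> exp (l\<^sup>2 * (4 * exp (4 * C)))"
    proof (cases "\<bar>l\<bar> \<le> 1")
      case True
      have "AE x in M. exp (l * X x) \<le> 1 + l * X x + 4 * l\<^sup>2 * exp (2 * Z x)"
        using XZ
      proof eventually_elim
        case (elim x)
        have a: "\<bar>l * X x\<bar> \<le> Z x"
          using True elim mult_mono[of "\<bar>l\<bar>" 1 "\<bar>X x\<bar>" "Z x"] by (simp add: abs_mult)
        have "(l * X x)\<^sup>2 = l\<^sup>2 * (X x)\<^sup>2" by (simp add: power_mult_distrib)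
        also have "\<dots> \<le> l\<^sup>2 * (Z x)\<^sup>2"
          using elim by (intro mult_left_mono) (auto simp: abs_le_square_iff[symmetric] power2_abs abs_le_iff)
        finally have b: "(l * X x)\<^sup>2 \<le> l\<^sup>2 * (Z x)\<^sup>2" .
        have q: "exp (l * X x) \<le> 1 + l * X x + (l * X x)\<^sup>2 * exp \<bar>l * X x\<bar>" by (rule exp_quad)
        have "(l * X x)\<^sup>2 * exp \<bar>l * X x\<bar> \<le> (l\<^sup>2 * (Z x)\<^sup>2) * exp (Z x)"
          by (intro mult_mono b) (use a in auto)
        also have "\<dots> \<le> (l\<^sup>2 * (4 * exp (Z x))) * exp (Z x)"
        proof (rule mult_right_mono)
          show "l\<^sup>2 * (Z x)\<^sup>2 \<le> l\<^sup>2 * (4 * exp (Z x))"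
            by (rule mult_left_mono[OF sq_le_exp[OF Z0]]) simp
        qed simp
        also have "\<dots> = 4 * l\<^sup>2 * exp (2 * Z x)"
          by (simp add: exp_add[symmetric])
        finally show ?case using q by linarith
      qed
      then have "integral\<^sup>L M (\<lambda>x. exp (l * X x)) \<le> integral\<^sup>L M (\<lambda>x. 1 + l * X x + 4 * l\<^sup>2 * exp (2 * Z x))"
      proof (intro integral_mono_AE iE)
        show "integrable M (\<lambda>x. 1 + l * X x + 4 * l\<^sup>2 * exp (2 * Z x))"
          by (intro Bochner_Integration.integrable_add integrable_const integrable_mult_right iX iZ) auto
      qed
      also have "\<dots> = 1 + l * integral\<^sup>L M X + 4 * l\<^sup>2 * integral\<^sup>L M (\<lambda>x. exp (2 * Z x))"
        using iX iZ[of 2] by (simp add: prob_space)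
      also have "\<dots> \<le> 1 + 4 * l\<^sup>2 * exp (C * 2\<^sup>2)"
        using bZ[of 2] EX by (simp add: mult_left_mono)
      also have "\<dots> \<le> exp (4 * l\<^sup>2 * exp (C * 2\<^sup>2))"
        by (rule exp_ge_add_one_self[THEN order_trans[rotated]]) simp
      also have "\<dots> = exp (l\<^sup>2 * (4 * exp (4 * C)))" by (simp add: mult_ac)
      finally show ?thesis .
    next
      case False
      have "AE x in M. exp (l * X x) \<le> exp (\<bar>l\<bar> * Z x)"
        using XZ
      proof eventually_elim
        case (elim x)
        have "l * X x \<le> \<bar>l\<bar> * \<bar>X x\<bar>" by (simp flip: abs_mult)
        also have "\<dots> \<le> \<bar>l\<bar> * Z x" by (rule mult_left_mono) (use elim in auto)
        finally have "l * X x \<le> \<bar>l\<bar> * Z x" .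
        then show ?case by simp
      qed
      then have "integral\<^sup>L M (\<lambda>x. exp (l * X x)) \<le> integral\<^sup>L M (\<lambda>x. exp (\<bar>l\<bar> * Z x))"
        by (intro integral_mono_AE iE iZ) auto
      also have "\<dots> \<le> exp (C * \<bar>l\<bar>\<^sup>2)" using False by (intro bZ) auto
      also have "\<dots> \<le> exp (l\<^sup>2 * (4 * exp (4 * C)))"
      proof -
        have "C \<le> exp (4 * C)" using exp_ge_add_one_self[of "4*C"] C0 by linarith
        then have "C \<le> 4 * exp (4 * C)" using exp_gt_zero[of "4*C"] by linarith
        then have "C * l\<^sup>2 \<le> (4 * exp (4 * C)) * l\<^sup>2" by (rule mult_right_mono) simp
        then show ?thesis by (simp add: mult.commute)
      qed
      finally show ?thesis .
    qed
  qed
qed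

lemma int_exp_pos:
  fixes g :: "'a \<Rightarrow> real"
  assumes P: "prob_space M" and i: "integrable M (\<lambda>x. exp (g x))"
  shows "0 < integral\<^sup>L M (\<lambda>x. exp (g x))"
proof -
  interpret prob_space M by fact
  have ge: "0 \<le> integral\<^sup>L M (\<lambda>x. exp (g x))" by (intro Bochner_Integration.integral_nonneg) auto
  have "integral\<^sup>L M (\<lambda>x. exp (g x)) \<noteq> 0"
  proof
    assume "integral\<^sup>L M (\<lambda>x. exp (g x)) = 0"
    then have "AE x in M. exp (g x) = 0"
      using integral_nonneg_eq_0_iff_AE[OF i] by auto
    then have "AE x in M. False" by simp
    then show False using AE_False by simp
  qed
  then show ?thesis using ge by linarith
qed

lemma PiM_coord:
  fixes g :: "'a \<Rightarrow> real" and n i :: nat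
  assumes PQ: "prob_space Q" and g: "integrable Q g" and i: "i < n"
  shows "integrable (PiM {..<n} (\<lambda>_. Q)) (\<lambda>ys. g (ys i)) \<and>
         integral\<^sup>L (PiM {..<n} (\<lambda>_. Q)) (\<lambda>ys. g (ys i)) = integral\<^sup>L Q g"
proof -
  interpret product_prob_space "\<lambda>_. Q" "{..<n}"
    by (simp add: product_prob_space_def product_prob_space_axioms_def product_sigma_finite_def PQ
        prob_space_imp_sigma_finite)
  define F where "F = (\<lambda>j y. if j = i then g y else 1)"
  have FI: "\<And>j. j \<in> {..<n} \<Longrightarrow> integrable Q (F j)"
  proof -
    interpret Qp: prob_space Q by fact
    fix j show "integrable Q (F j)" by (cases "j = i") (auto simp: F_def g)
  qed
  have eq: "(\<Prod>j\<in>{..<n}. F j (x j)) = g (x i)" for x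
    using prod.delta[OF finite_lessThan[of n], of i "\<lambda>j. g (x j)"] i by (simp add: F_def)
  have "integrable (PiM {..<n} (\<lambda>_. Q)) (\<lambda>x. \<Prod>j\<in>{..<n}. F j (x j))"
    by (rule product_integrable_prod) (auto intro: FI)
  moreover have "integral\<^sup>L (PiM {..<n} (\<lambda>_. Q)) (\<lambda>x. \<Prod>j\<in>{..<n}. F j (x j)) = (\<Prod>j\<in>{..<n}. integral\<^sup>L Q (F j))"
    by (rule product_integral_prod) (auto intro: FI)
  moreover have "(\<Prod>j\<in>{..<n}. integral\<^sup>L Q (F j)) = integral\<^sup>L Q g"
  proof -
    have "(\<Prod>j\<in>{..<n}. integral\<^sup>L Q (F j)) = (\<Prod>j\<in>{..<n}. if j = i then integral\<^sup>L Q g else 1)"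
      by (intro prod.cong) (auto simp: F_def prob_space.prob_space[OF PQ])
    also have "\<dots> = integral\<^sup>L Q g" using i by (simp add: prod.delta)
    finally show ?thesis .
  qed
  ultimately show ?thesis unfolding eq by simp
qed

lemma prod_part:
  fixes f :: "'a \<Rightarrow> real" and D :: real and n :: nat
  assumes PQ: "prob_space Q" and fi: "integrable Q f"
    and H: "\<And>l. integrable Q (\<lambda>y. exp (l * (f y - integral\<^sup>L Q f))) \<and>
               integral\<^sup>L Q (\<lambda>y. exp (l * (f y - integral\<^sup>L Q f))) \<le> exp (l\<^sup>2 * D)"
  shows "subgaussian (PiM {..<n} (\<lambda>_. Q)) (\<lambda>ys. \<Sum>i<n. f (ys i)) (real n * (2 * D))"
proof -
  interpret product_prob_space "\<lambda>_. Q" "{..<n}"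
    by (simp add: product_prob_space_def product_prob_space_axioms_def product_sigma_finite_def PQ
        prob_space_imp_sigma_finite)
  define PM where "PM = PiM {..<n} (\<lambda>_. Q)"
  have PP: "prob_space PM" unfolding PM_def using assms(1) by (auto intro!: prob_space_PiM)
  define E where "E = integral\<^sup>L Q f"
  have I1: "integrable PM (\<lambda>ys. \<Sum>i<n. f (ys i))"
    unfolding PM_def by (intro Bochner_Integration.integrable_sum) (use PiM_coord[OF PQ fi] in auto)
  have E1: "integral\<^sup>L PM (\<lambda>ys. \<Sum>i<n. f (ys i)) = real n * E"
    unfolding PM_def E_def
    by (subst Bochner_Integration.integral_sum) (use PiM_coord[OF PQ fi] in auto)
  show ?thesis
    unfolding subgaussian_def PM_def[symmetric]
  proof (intro conjI allI I1)
    fix l :: real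
    define G where "G = (\<lambda>(i::nat) y. exp (l * (f y - E)))"
    have eqf: "exp (l * ((\<Sum>i<n. f (ys i)) - real n * E)) = (\<Prod>i\<in>{..<n}. G i (ys i))" for ys
    proof -
      have "l * ((\<Sum>i<n. f (ys i)) - real n * E) = (\<Sum>i<n. l * (f (ys i) - E))"
        by (simp add: sum_distrib_left[symmetric] sum_subtractf right_diff_distrib)
      then show ?thesis by (simp add: G_def exp_sum)
    qed
    have GI: "\<And>i. i \<in> {..<n} \<Longrightarrow> integrable Q (G i)"
      using H unfolding G_def E_def by auto
    have "integrable PM (\<lambda>ys. \<Prod>i\<in>{..<n}. G i (ys i))"
      unfolding PM_def by (rule product_integrable_prod) (auto intro: GI)
    then show "integrable PM (\<lambda>x. exp (l * ((\<Sum>i<n. f (x i)) - integral\<^sup>L PM (\<lambda>ys. \<Sum>i<n. f (ys i)))))"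
      unfolding E1 eqf .
    have "integral\<^sup>L PM (\<lambda>ys. \<Prod>i\<in>{..<n}. G i (ys i)) = (\<Prod>i\<in>{..<n}. integral\<^sup>L Q (G i))"
      unfolding PM_def by (rule product_integral_prod) (auto intro: GI)
    also have "\<dots> = (integral\<^sup>L Q (\<lambda>y. exp (l * (f y - E)))) ^ n"
      by (simp add: G_def)
    finally have ev: "integral\<^sup>L PM (\<lambda>ys. \<Prod>i\<in>{..<n}. G i (ys i)) = (integral\<^sup>L Q (\<lambda>y. exp (l * (f y - E)))) ^ n" .
    have pos: "0 < integral\<^sup>L Q (\<lambda>y. exp (l * (f y - E)))"
      by (rule int_exp_pos[OF PQ]) (use H in \<open>auto simp: E_def\<close>)
    have "(integral\<^sup>L Q (\<lambda>y. exp (l * (f y - E)))) ^ n \<le> (exp (l\<^sup>2 * D)) ^ n"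
      by (intro power_mono) (use H pos in \<open>auto simp: E_def\<close>)
    also have "\<dots> = exp (real n * (l\<^sup>2 * D))"
      by (rule exp_of_nat_mult[symmetric])
    also have "exp (real n * (l\<^sup>2 * D)) = exp (l\<^sup>2 * (real n * (2 * D)) / 2)"
      by simp
    finally have le: "(integral\<^sup>L Q (\<lambda>y. exp (l * (f y - E)))) ^ n \<le> exp (l\<^sup>2 * (real n * (2 * D)) / 2)" .
    have "ln (integral\<^sup>L PM (\<lambda>x. exp (l * ((\<Sum>i<n. f (x i)) - integral\<^sup>L PM (\<lambda>ys. \<Sum>i<n. f (ys i))))))
        = ln ((integral\<^sup>L Q (\<lambda>y. exp (l * (f y - E)))) ^ n)"
      unfolding E1 eqf ev ..
    also have "\<dots> \<le> ln (exp (l\<^sup>2 * (real n * (2 * D)) / 2))"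
      using le pos by (subst ln_le_cancel_iff) auto
    also have "\<dots> = l\<^sup>2 * (real n * (2 * D)) / 2" by simp
    finally show "ln (integral\<^sup>L PM (\<lambda>x. exp (l * ((\<Sum>i<n. f (x i)) - integral\<^sup>L PM (\<lambda>ys. \<Sum>i<n. f (ys i))))))
        \<le> l\<^sup>2 * (real n * (2 * D)) / 2" .
  qed
qed

lemma jg_bound:
  fixes p :: "nat \<Rightarrow> 'a \<Rightarrow> real"
  assumes pos: "\<forall>k\<in>{..<K}. 0 < p k y" and w: "w \<in> prob_simplex K"
  shows "\<bar>jensen_gap K p w y\<bar> \<le> 2 * (\<Sum>k<K. \<bar>ln (p k y)\<bar>)"
proof -
  define W where "W = (\<Sum>k<K. \<bar>ln (p k y)\<bar>)"
  have w0: "\<And>k. k < K \<Longrightarrow> 0 \<le> w k" and w1: "(\<Sum>k<K. w k) = 1"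
    using w by (auto simp: prob_simplex_def)
  have lW: "\<bar>ln (p k y)\<bar> \<le> W" if "k < K" for k
    unfolding W_def by (rule member_le_sum) (use that in auto)
  have up: "p k y \<le> exp W" if "k < K" for k
  proof -
    have "p k y = exp (ln (p k y))" using pos that by simp
    also have "\<dots> \<le> exp W" using lW[OF that] by simp
    finally show ?thesis .
  qed
  have lo: "exp (- W) \<le> p k y" if "k < K" for k
  proof -
    have "exp (- W) \<le> exp (ln (p k y))" using lW[OF that] by simp
    also have "\<dots> = p k y" using pos that by simp
    finally show ?thesis .
  qed
  define S where "S = (\<Sum>k<K. w k * p k y)"
  have S1: "S \<le> exp W"
  proof -
    have "S \<le> (\<Sum>k<K. w k * exp W)"
      unfolding S_def by (intro sum_mono mult_left_mono up w0) auto
    also have "\<dots> = exp W" using w1 by (simp add: sum_distrib_right[symmetric])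
    finally show ?thesis .
  qed
  have S2: "exp (- W) \<le> S"
  proof -
    have "(\<Sum>k<K. w k * exp (- W)) \<le> S"
      unfolding S_def by (intro sum_mono mult_left_mono lo w0) auto
    moreover have "(\<Sum>k<K. w k * exp (- W)) = exp (- W)" using w1 by (simp add: sum_distrib_right[symmetric])
    ultimately show ?thesis by simp
  qed
  have Sp: "0 < S" using S2 exp_gt_zero[of "-W"] by linarith
  have lnS1: "ln S \<le> W" using S1 Sp by (metis ln_exp ln_le_cancel_iff exp_gt_zero)
  have lnS2: "- W \<le> ln S" using S2 Sp by (metis ln_exp ln_le_cancel_iff exp_gt_zero)
  have T: "\<bar>\<Sum>k<K. w k * ln (p k y)\<bar> \<le> W"
  proof -
    have "\<bar>\<Sum>k<K. w k * ln (p k y)\<bar> \<le> (\<Sum>k<K. \<bar>w k * ln (p k y)\<bar>)" by (rule sum_abs)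
    also have "\<dots> \<le> (\<Sum>k<K. w k * W)"
      by (intro sum_mono) (use w0 lW in \<open>auto simp: abs_mult intro: mult_left_mono\<close>)
    also have "\<dots> = W" using w1 by (simp add: sum_distrib_right[symmetric])
    finally show ?thesis .
  qed
  have "\<bar>jensen_gap K p w y\<bar> = \<bar>- (\<Sum>k<K. w k * ln (p k y)) + ln S\<bar>"
    by (simp add: jensen_gap_def S_def)
  also have "\<dots> \<le> 2 * W" using T lnS1 lnS2 by linarith
  finally show ?thesis by (simp add: W_def)
qed

theorem theorem3p2:
  fixes Q :: "'a measure" and p :: "nat \<Rightarrow> 'a \<Rightarrow> real"
    and K n :: nat and s :: real
  assumes "prob_space Q"
    and "K \<ge> 1" and "n \<ge> 1"
    and "\<And>k. k < K \<Longrightarrow> p k \<in> borel_measurable Q"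
    and "\<And>k. k < K \<Longrightarrow> AE y in Q. p k y > 0"
    and "s > 0"
    and "\<And>k. k < K \<Longrightarrow> subgaussian Q (\<lambda>y. - ln (p k y)) (s\<^sup>2)"
  shows "\<exists>s'>0. \<forall>w \<in> prob_simplex K.
           subgaussian (PiM {..<n} (\<lambda>_. Q))
             (\<lambda>ys. \<Sum>i<n. jensen_gap K p w (ys i)) (real n * s')"
proof -
  interpret prob_space Q by fact
  have lnm: "(\<lambda>y. ln (p k y)) \<in> borel_measurable Q" if "k < K" for k
    by (intro borel_measurable_ln assms(4) that)
  define m where "m k = integral\<^sup>L Q (\<lambda>y. - ln (p k y))" for k
  define A where "A = (\<Sum>k<K. \<bar>m k\<bar>)"
  have A0: "0 \<le> A" unfolding A_def by (intro sum_nonneg) auto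
  have mA: "\<bar>m k\<bar> \<le> A" if "k < K" for k
    unfolding A_def by (rule member_le_sum) (use that in auto)
  have sg: "integrable Q (\<lambda>y. exp (u * (- ln (p k y) - m k))) \<and>
      ln (integral\<^sup>L Q (\<lambda>y. exp (u * (- ln (p k y) - m k)))) \<le> u\<^sup>2 * s\<^sup>2 / 2" if "k < K" for k u
    using assms(7)[OF that] unfolding subgaussian_def m_def by blast
  have L1: "integrable Q (\<lambda>y. exp (u * ln (p k y))) \<and>
      integral\<^sup>L Q (\<lambda>y. exp (u * ln (p k y))) \<le> exp (\<bar>u\<bar> * A + u\<^sup>2 * s\<^sup>2 / 2)" if k: "k < K" for k u
  proof -
    define v where "v = - u"
    have eq: "exp (u * ln (p k y)) = exp (v * m k) * exp (v * (- ln (p k y) - m k))" for y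
      unfolding v_def mult_exp_exp by (simp add: algebra_simps)
    have i1: "integrable Q (\<lambda>y. exp (v * (- ln (p k y) - m k)))" using sg[OF k] by blast
    have pos: "0 < integral\<^sup>L Q (\<lambda>y. exp (v * (- ln (p k y) - m k)))"
      by (rule int_exp_pos[OF assms(1) i1])
    have b1: "integral\<^sup>L Q (\<lambda>y. exp (v * (- ln (p k y) - m k))) \<le> exp (u\<^sup>2 * s\<^sup>2 / 2)"
    proof -
      have "integral\<^sup>L Q (\<lambda>y. exp (v * (- ln (p k y) - m k))) = exp (ln (integral\<^sup>L Q (\<lambda>y. exp (v * (- ln (p k y) - m k)))))"
        using pos by simp
      also have "\<dots> \<le> exp (v\<^sup>2 * s\<^sup>2 / 2)" using sg[OF k, of v] by simp
      finally show ?thesis by (simp add: v_def)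
    qed
    have b2: "exp (v * m k) \<le> exp (\<bar>u\<bar> * A)"
    proof -
      have "v * m k \<le> \<bar>v\<bar> * \<bar>m k\<bar>" by (simp flip: abs_mult)
      also have "\<dots> \<le> \<bar>u\<bar> * A" using mA[OF k] by (simp add: v_def mult_left_mono)
      finally show ?thesis by simp
    qed
    show ?thesis
    proof
      show "integrable Q (\<lambda>y. exp (u * ln (p k y)))"
        unfolding eq by (intro integrable_mult_right i1)
      have "integral\<^sup>L Q (\<lambda>y. exp (u * ln (p k y))) = exp (v * m k) * integral\<^sup>L Q (\<lambda>y. exp (v * (- ln (p k y) - m k)))"
        unfolding eq by simp
      also have "\<dots> \<le> exp (\<bar>u\<bar> * A) * exp (u\<^sup>2 * s\<^sup>2 / 2)"
        by (intro mult_mono b1 b2) (use pos in auto)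
      also have "\<dots> = exp (\<bar>u\<bar> * A + u\<^sup>2 * s\<^sup>2 / 2)" by (simp add: mult_exp_exp)
      finally show "integral\<^sup>L Q (\<lambda>y. exp (u * ln (p k y))) \<le> exp (\<bar>u\<bar> * A + u\<^sup>2 * s\<^sup>2 / 2)" .
    qed
  qed
  define W where "W y = (\<Sum>k<K. \<bar>ln (p k y)\<bar>)" for y
  have Wm: "W \<in> borel_measurable Q"
    unfolding W_def by (intro borel_measurable_sum borel_measurable_abs lnm) auto
  have W0: "0 \<le> W y" for y unfolding W_def by (intro sum_nonneg) auto
  have ptw: "exp (v * W y) \<le> (\<Sum>k<K. exp ((v * K) * ln (p k y)) + exp ((- (v * K)) * ln (p k y)))"
    if v: "0 \<le> v" for v y
  proof -
    define F where "F = (\<lambda>k. \<bar>ln (p k y)\<bar>) ` {..<K}"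
    have Ff: "finite F" "F \<noteq> {}" using assms(2) by (auto simp: F_def lessThan_empty_iff)
    obtain j where j: "j < K" "Max F = \<bar>ln (p j y)\<bar>" using Max_in[OF Ff] by (auto simp: F_def)
    have le: "\<bar>ln (p k y)\<bar> \<le> \<bar>ln (p j y)\<bar>" if "k < K" for k
    proof -
      have "\<bar>ln (p k y)\<bar> \<in> F" using that by (simp add: F_def)
      then have "\<bar>ln (p k y)\<bar> \<le> Max F" by (rule Max_ge[OF Ff(1)])
      then show ?thesis using j by simp
    qed
    have "W y \<le> (\<Sum>k<K. \<bar>ln (p j y)\<bar>)" unfolding W_def by (intro sum_mono le) auto
    also have "\<dots> = real K * \<bar>ln (p j y)\<bar>" by simp
    finally have "v * W y \<le> v * (real K * \<bar>ln (p j y)\<bar>)" by (intro mult_left_mono v)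
    then have "exp (v * W y) \<le> exp (v * (real K * \<bar>ln (p j y)\<bar>))" by simp
    also have "\<dots> \<le> exp ((v * K) * ln (p j y)) + exp ((- (v * K)) * ln (p j y))"
    proof (cases "0 \<le> ln (p j y)")
      case True then show ?thesis by (simp add: mult_ac add_increasing2)
    next
      case False then show ?thesis by (simp add: mult_ac add_increasing)
    qed
    also have "\<dots> \<le> (\<Sum>k<K. exp ((v * K) * ln (p k y)) + exp ((- (v * K)) * ln (p k y)))"
      by (rule member_le_sum[where f = "\<lambda>k. exp ((v * K) * ln (p k y)) + exp ((- (v * K)) * ln (p k y))"])
        (use j in \<open>auto intro: add_nonneg_nonneg\<close>)
    finally show ?thesis .
  qed
  have L2: "integrable Q (\<lambda>y. exp (v * W y)) \<and>
      integral\<^sup>L Q (\<lambda>y. exp (v * W y)) \<le> 2 * real K * exp (v * K * A + (v * K)\<^sup>2 * s\<^sup>2 / 2)"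
    if v: "0 \<le> v" for v
  proof -
    define B where "B = (\<lambda>y. (\<Sum>k<K. exp ((v * K) * ln (p k y)) + exp ((- (v * K)) * ln (p k y))))"
    have I1: "integrable Q (\<lambda>y. exp ((v * K) * ln (p k y)))" if k: "k < K" for k
      using L1[OF k, of "v * K"] by blast
    have I2: "integrable Q (\<lambda>y. exp ((- (v * K)) * ln (p k y)))" if k: "k < K" for k
      using L1[OF k, of "- (v * K)"] by blast
    have I12: "integrable Q (\<lambda>y. exp ((v * K) * ln (p k y)) + exp ((- (v * K)) * ln (p k y)))"
      if k: "k \<in> {..<K}" for k
      using k by (intro Bochner_Integration.integrable_add I1 I2) auto
    have Bi: "integrable Q B" unfolding B_def
      by (rule Bochner_Integration.integrable_sum) (rule I12)
    have Bb: "integral\<^sup>L Q B \<le> 2 * real K * exp (v * K * A + (v * K)\<^sup>2 * s\<^sup>2 / 2)"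
    proof -
      have "integral\<^sup>L Q B = (\<Sum>k<K. integral\<^sup>L Q (\<lambda>y. exp ((v * K) * ln (p k y)) + exp ((- (v * K)) * ln (p k y))))"
        unfolding B_def by (rule Bochner_Integration.integral_sum) (rule I12)
      also have "\<dots> = (\<Sum>k<K. integral\<^sup>L Q (\<lambda>y. exp ((v * K) * ln (p k y))) + integral\<^sup>L Q (\<lambda>y. exp ((- (v * K)) * ln (p k y))))"
      proof (rule sum.cong[OF refl])
        fix k assume "k \<in> {..<K}"
        then have k: "k < K" by simp
        show "integral\<^sup>L Q (\<lambda>y. exp ((v * K) * ln (p k y)) + exp ((- (v * K)) * ln (p k y))) =
          integral\<^sup>L Q (\<lambda>y. exp ((v * K) * ln (p k y))) + integral\<^sup>L Q (\<lambda>y. exp ((- (v * K)) * ln (p k y)))"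
          by (rule Bochner_Integration.integral_add[OF I1[OF k] I2[OF k]])
      qed
      also have "\<dots> \<le> (\<Sum>k<K. exp (v * K * A + (v * K)\<^sup>2 * s\<^sup>2 / 2) + exp (v * K * A + (v * K)\<^sup>2 * s\<^sup>2 / 2))"
      proof (intro sum_mono add_mono)
        fix k assume "k \<in> {..<K}"
        then have k: "k < K" by simp
        show "integral\<^sup>L Q (\<lambda>y. exp ((v * K) * ln (p k y))) \<le> exp (v * K * A + (v * K)\<^sup>2 * s\<^sup>2 / 2)"
          using L1[OF k, of "v * K"] v by simp
        show "integral\<^sup>L Q (\<lambda>y. exp ((- (v * K)) * ln (p k y))) \<le> exp (v * K * A + (v * K)\<^sup>2 * s\<^sup>2 / 2)"
          using L1[OF k, of "- (v * K)"] v by simp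
      qed
      also have "\<dots> = 2 * real K * exp (v * K * A + (v * K)\<^sup>2 * s\<^sup>2 / 2)" by simp
      finally show ?thesis .
    qed
    have i: "integrable Q (\<lambda>y. exp (v * W y))"
    proof (rule Bochner_Integration.integrable_bound[OF Bi])
      show "(\<lambda>y. exp (v * W y)) \<in> borel_measurable Q" using Wm by simp
      show "AE y in Q. norm (exp (v * W y)) \<le> norm (B y)"
      proof (rule AE_I2)
        fix y
        have "0 \<le> B y" unfolding B_def by (intro sum_nonneg add_nonneg_nonneg) auto
        then show "norm (exp (v * W y)) \<le> norm (B y)" using ptw[OF v, of y] by (simp add: B_def)
      qed
    qed
    have "integral\<^sup>L Q (\<lambda>y. exp (v * W y)) \<le> integral\<^sup>L Q B"
      by (intro integral_mono i Bi) (use ptw[OF v] in \<open>simp add: B_def\<close>)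
    then show ?thesis using i Bb by simp
  qed
  have Wi: "integrable Q W"
  proof (rule Bochner_Integration.integrable_bound[OF conjunct1[OF L2[of 1]]])
    show "AE y in Q. norm (W y) \<le> norm (exp (1 * W y))"
    proof (rule AE_I2)
      fix y
      have "W y \<le> exp (W y)" using exp_ge_add_one_self[of "W y"] by linarith
      then show "norm (W y) \<le> norm (exp (1 * W y))" using W0[of y] by simp
    qed
  qed (use Wm in auto)
  define EW where "EW = integral\<^sup>L Q W"
  have EW0: "0 \<le> EW" unfolding EW_def by (intro Bochner_Integration.integral_nonneg W0)
  define Z where "Z y = 2 * W y + 2 * EW" for y
  have Zm: "Z \<in> borel_measurable Q" unfolding Z_def using Wm by simp
  have Z0: "0 \<le> Z y" for y unfolding Z_def using W0[of y] EW0 by simp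
  have Zeq: "exp (t * Z y) = exp (2 * t * EW) * exp ((2 * t) * W y)" for t y
    unfolding Z_def mult_exp_exp by (simp add: algebra_simps)
  have iZ: "integrable Q (\<lambda>y. exp (t * Z y))" if "0 \<le> t" for t
    unfolding Zeq by (intro integrable_mult_right conjunct1[OF L2]) (use that in simp)
  define C where "C = 2 * EW + ln (2 * real K) + 2 * K * A + 2 * K\<^sup>2 * s\<^sup>2"
  have lnK: "0 \<le> ln (2 * real K)" using assms(2) by simp
  have C0: "0 \<le> C" unfolding C_def using EW0 A0 lnK by simp
  have bZ: "integral\<^sup>L Q (\<lambda>y. exp (t * Z y)) \<le> exp (C * t\<^sup>2)" if t: "1 \<le> t" for t
  proof -
    have "integral\<^sup>L Q (\<lambda>y. exp (t * Z y)) = exp (2 * t * EW) * integral\<^sup>L Q (\<lambda>y. exp ((2 * t) * W y))"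
      unfolding Zeq by simp
    also have "\<dots> \<le> exp (2 * t * EW) * (2 * real K * exp ((2 * t) * K * A + ((2 * t) * K)\<^sup>2 * s\<^sup>2 / 2))"
      by (intro mult_left_mono conjunct2[OF L2]) (use t in auto)
    also have "\<dots> = exp (2 * t * EW + ln (2 * real K) + (2 * t) * K * A + ((2 * t) * K)\<^sup>2 * s\<^sup>2 / 2)"
      using assms(2) by (simp add: exp_add)
    also have "\<dots> \<le> exp (C * t\<^sup>2)"
    proof -
      have tt1: "t \<le> t\<^sup>2" using mult_right_mono[of 1 t t] t by (simp add: power2_eq_square)
      have tt: "t \<le> t\<^sup>2" "1 \<le> t\<^sup>2" using tt1 t by auto
      have "2 * t * EW \<le> 2 * t\<^sup>2 * EW" using tt EW0 by (simp add: mult_right_mono)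
      moreover have "ln (2 * real K) \<le> ln (2 * real K) * t\<^sup>2" using tt lnK by (simp add: mult_left_mono[of 1 "t\<^sup>2", simplified])
      moreover have "(2 * t) * K * A \<le> 2 * K * A * t\<^sup>2"
      proof -
        have "(2 * K * A) * t \<le> (2 * K * A) * t\<^sup>2" using tt A0 by (intro mult_left_mono) auto
        then show ?thesis by (simp add: mult_ac)
      qed
      moreover have "((2 * t) * K)\<^sup>2 * s\<^sup>2 / 2 = 2 * K\<^sup>2 * s\<^sup>2 * t\<^sup>2"
        by (simp add: power_mult_distrib)
      ultimately have "2 * t * EW + ln (2 * real K) + (2 * t) * K * A + ((2 * t) * K)\<^sup>2 * s\<^sup>2 / 2 \<le> C * t\<^sup>2"
        unfolding C_def by (simp add: algebra_simps)
      then show ?thesis by simp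
    qed
    finally show ?thesis .
  qed
  define D where "D = 4 * exp (4 * C)"
  have D0: "0 < D" unfolding D_def by simp
  have AEpos: "AE y in Q. \<forall>k\<in>{..<K}. 0 < p k y"
    by (rule AE_finite_allI) (use assms(5) in auto)
  show ?thesis
  proof (intro exI[of _ "2 * D"] conjI ballI)
    show "0 < 2 * D" using D0 by simp
    fix w assume w: "w \<in> prob_simplex K"
    define f where "f = jensen_gap K p w"
    have fm: "f \<in> borel_measurable Q"
      unfolding f_def jensen_gap_def[abs_def]
      by (intro borel_measurable_add borel_measurable_uminus borel_measurable_sum borel_measurable_times
          borel_measurable_const borel_measurable_ln assms(4)) auto
    have fb: "AE y in Q. \<bar>f y\<bar> \<le> 2 * W y"
      using AEpos by eventually_elim (use jg_bound w in \<open>auto simp: f_def W_def\<close>)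
    have fi: "integrable Q f"
    proof (rule Bochner_Integration.integrable_bound[of _ "\<lambda>y. 2 * W y"])
      show "integrable Q (\<lambda>y. 2 * W y)" using Wi by simp
      show "AE y in Q. norm (f y) \<le> norm (2 * W y)" using fb by eventually_elim (use W0 in simp)
    qed (rule fm)
    have Ef: "\<bar>integral\<^sup>L Q f\<bar> \<le> 2 * EW"
    proof -
      have "\<bar>integral\<^sup>L Q f\<bar> \<le> integral\<^sup>L Q (\<lambda>y. \<bar>f y\<bar>)" by (rule integral_abs_bound)
      also have "\<dots> \<le> integral\<^sup>L Q (\<lambda>y. 2 * W y)"
        by (intro integral_mono_AE fb) (use fi Wi in auto)
      also have "\<dots> = 2 * EW" by (simp add: EW_def)
      finally show ?thesis .
    qed
    define X where "X y = f y - integral\<^sup>L Q f" for y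
    have Xm: "X \<in> borel_measurable Q" unfolding X_def using fm by simp
    have XZ: "AE y in Q. \<bar>X y\<bar> \<le> Z y"
      using fb by eventually_elim (use Ef in \<open>auto simp: X_def Z_def\<close>)
    have EX: "integral\<^sup>L Q X = 0"
      unfolding X_def using fi by (simp add: prob_space)
    have core: "integrable Q (\<lambda>y. exp (l * X y)) \<and> integral\<^sup>L Q (\<lambda>y. exp (l * X y)) \<le> exp (l\<^sup>2 * D)" for l
      using subg_core[OF assms(1) Xm Zm Z0 XZ EX iZ bZ C0, of l] unfolding D_def by simp
    have "subgaussian (PiM {..<n} (\<lambda>_. Q)) (\<lambda>ys. \<Sum>i<n. f (ys i)) (real n * (2 * D))"
      by (rule prod_part[OF assms(1) fi]) (use core in \<open>simp add: X_def\<close>)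
    then show "subgaussian (PiM {..<n} (\<lambda>_. Q)) (\<lambda>ys. \<Sum>i<n. jensen_gap K p w (ys i)) (real n * (2 * D))"
      by (simp add: f_def)
  qed
qed

end
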